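(* Let $\omega,\gamma_+,\gamma_-,\gamma_z\in\mathbb{R}$ and let $\mathcal{L}^\ddagger:\mathcal{M}_2\to\mathcal{M}_2$ be $$\mathcal{L}^\ddagger(X)=\tfrac{i\omega}{2}[\sigma_z,X]+\gamma_+\Big(\sigma_-X\sigma_+-\tfrac12\{\sigma_-\sigma_+,X\}\Big)+\gamma_-\Big(\sigma_+X\sigma_--\tfrac12\{\sigma_+\sigma_-,X\}\Big)+\gamma_z(\sigma_zX\sigma_z-X).$$ Then $e^{t\mathcal{L}^\ddagger}$ is a unital Schwarz map for every $t\ge 0$ if and only if $\gamma_+\ge0$, $\gamma_-\ge 0$, $\gamma_++4\gamma_z\ge 0$ and $\gamma_-+4\gamma_z\ge 0$.
   Context: $\sigma_x,\sigma_y,\sigma_z$ are the Pauli matrices, $\sigma_\pm=\frac12(\sigma_x\pm i\sigma_y)$, $[A,B]=AB-BA$, $\{A,B\}=AB+BA$. A unital Schwarz map on $\mathcal{M}_n$ is a linear map $\Phi$ with $\Phi(\mathbb{1})=\mathbb{1}$ and $\Phi(X^\dagger X)\ge\Phi(X)^\dagger\Phi(X)$ for all $X\in\mathcal{M}_n$. *)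

theory Defs
  imports "HOL-Analysis.Analysis"
begin

type_synonym cmat2 = "complex^2^2"

definition mat2 :: "complex \<Rightarrow> complex \<Rightarrow> complex \<Rightarrow> complex \<Rightarrow> cmat2" where
  "mat2 a b c d = (\<chi> i j. if i = 1 then (if j = 1 then a else b) else (if j = 1 then c else d))"

definition csc :: "complex \<Rightarrow> cmat2 \<Rightarrow> cmat2" where
  "csc c A = (\<chi> i j. c * A$i$j)"

definition adj :: "cmat2 \<Rightarrow> cmat2" where
  "adj A = (\<chi> i j. cnj (A$j$i))"

definition sigma_x :: cmat2 where "sigma_x = mat2 0 1 1 0"
definition sigma_y :: cmat2 where "sigma_y = mat2 0 (-\<i>) \<i> 0"
definition sigma_z :: cmat2 where "sigma_z = mat2 1 0 0 (-1)"
definition sigma_plus :: cmat2 where "sigma_plus = csc (1/2) (sigma_x + csc \<i> sigma_y)"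
definition sigma_minus :: cmat2 where "sigma_minus = csc (1/2) (sigma_x - csc \<i> sigma_y)"

definition comm :: "cmat2 \<Rightarrow> cmat2 \<Rightarrow> cmat2" where "comm A B = A ** B - B ** A"
definition acomm :: "cmat2 \<Rightarrow> cmat2 \<Rightarrow> cmat2" where "acomm A B = A ** B + B ** A"

definition psd :: "cmat2 \<Rightarrow> bool" where
  "psd A \<longleftrightarrow> (\<forall>v::complex^2. let q = (\<Sum>i\<in>UNIV. \<Sum>j\<in>UNIV. cnj (v$i) * A$i$j * v$j)
                 in Im q = 0 \<and> Re q \<ge> 0)"

definition clinear_map :: "(cmat2 \<Rightarrow> cmat2) \<Rightarrow> bool" where
  "clinear_map \<Phi> \<longleftrightarrow> (\<forall>c X Y. \<Phi> (csc c X + Y) = csc c (\<Phi> X) + \<Phi> Y)"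

definition unital_schwarz :: "(cmat2 \<Rightarrow> cmat2) \<Rightarrow> bool" where
  "unital_schwarz \<Phi> \<longleftrightarrow> clinear_map \<Phi> \<and> \<Phi> (mat 1) = mat 1 \<and>
     (\<forall>X. psd (\<Phi> (adj X ** X) - adj (\<Phi> X) ** \<Phi> X))"

definition Ldag :: "real \<Rightarrow> real \<Rightarrow> real \<Rightarrow> real \<Rightarrow> cmat2 \<Rightarrow> cmat2" where
  "Ldag \<omega> gp gm gz X =
     csc (\<i> * of_real \<omega> / 2) (comm sigma_z X)
   + csc (of_real gp) (sigma_minus ** X ** sigma_plus - csc (1/2) (acomm (sigma_minus ** sigma_plus) X))
   + csc (of_real gm) (sigma_plus ** X ** sigma_minus - csc (1/2) (acomm (sigma_plus ** sigma_minus) X))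
   + csc (of_real gz) (sigma_z ** X ** sigma_z - X)"

definition expmap :: "real \<Rightarrow> (cmat2 \<Rightarrow> cmat2) \<Rightarrow> cmat2 \<Rightarrow> cmat2" where
  "expmap t L X = (\<Sum>n. (t ^ n / fact n) *\<^sub>R ((L ^^ n) X))"

end

theory Submission
  imports Defs
begin

lemma mat2_eq: "X = mat2 (X$1$1) (X$1$2) (X$2$1) (X$2$2)"
  by (simp add: vec_eq_iff forall_2 mat2_def)

lemma mat2_nth: "mat2 a b c d $ 1 $ 1 = a" "mat2 a b c d $ 1 $ 2 = b"
  "mat2 a b c d $ 2 $ 1 = c" "mat2 a b c d $ 2 $ 2 = d"
  by (simp_all add: mat2_def)

lemma mat2_inj: "mat2 a b c d = mat2 a' b' c' d' \<longleftrightarrow> a = a' \<and> b = b' \<and> c = c' \<and> d = d'"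
  by (metis mat2_nth)

lemma mat2_mult: "mat2 a b c d ** mat2 a' b' c' d' = mat2 (a*a' + b*c') (a*b' + b*d') (c*a' + d*c') (c*b' + d*d')"
  by (simp add: vec_eq_iff forall_2 mat2_def matrix_matrix_mult_def sum_2)
lemma mat2_add: "mat2 a b c d + mat2 a' b' c' d' = mat2 (a+a') (b+b') (c+c') (d+d')"
  by (simp add: vec_eq_iff forall_2 mat2_def)
lemma mat2_diff: "mat2 a b c d - mat2 a' b' c' d' = mat2 (a-a') (b-b') (c-c') (d-d')"
  by (simp add: vec_eq_iff forall_2 mat2_def)
lemma mat2_csc: "csc k (mat2 a b c d) = mat2 (k*a) (k*b) (k*c) (k*d)"
  by (simp add: vec_eq_iff forall_2 mat2_def csc_def)
lemma mat2_scaleR: "r *\<^sub>R (mat2 a b c d) = mat2 (r*a) (r*b) (r*c) (r*d)"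
  by (simp add: vec_eq_iff forall_2 mat2_def del: scaleR_conv_of_real; simp add: scaleR_conv_of_real)
lemma mat2_adj: "adj (mat2 a b c d) = mat2 (cnj a) (cnj c) (cnj b) (cnj d)"
  by (simp add: vec_eq_iff forall_2 mat2_def adj_def)
lemma mat2_one: "mat 1 = mat2 1 0 0 1"
  by (simp add: vec_eq_iff forall_2 mat2_def mat_def)

lemmas mat2_simps = mat2_mult mat2_add mat2_diff mat2_csc mat2_scaleR mat2_adj mat2_inj

lemma sigmas: "sigma_z = mat2 1 0 0 (-1)" "sigma_plus = mat2 0 1 0 0" "sigma_minus = mat2 0 0 1 0"
  by (simp_all add: sigma_z_def sigma_plus_def sigma_minus_def sigma_x_def sigma_y_def mat2_simps)

definition lam :: "real \<Rightarrow> real \<Rightarrow> real \<Rightarrow> real \<Rightarrow> complex" where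
  "lam \<omega> gp gm gz = \<i> * \<omega> - (gp+gm)/2 - 2*gz"

lemma Ldag_mat2: "Ldag \<omega> gp gm gz (mat2 a b c d) =
   mat2 (gm*(d-a)) (lam \<omega> gp gm gz * b) (cnj (lam \<omega> gp gm gz) * c) (gp*(a-d))"
  by (simp add: Ldag_def sigmas mat2_simps comm_def acomm_def lam_def; simp add: algebra_simps)


definition GG where "GG gp gm = gp + gm"

lemma Lpow: "(Ldag \<omega> gp gm gz ^^ n) (mat2 a b c d) =
   mat2 (if n = 0 then a else - gm * (-(gp+gm))^(n-1) * (a-d)) (lam \<omega> gp gm gz ^ n * b)
        (cnj (lam \<omega> gp gm gz) ^ n * c) (if n = 0 then d else gp * (-(gp+gm))^(n-1) * (a-d))"
proof (induction n)
  case 0 then show ?case by simp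
next
  case (Suc n)
  show ?case
  proof (cases n)
    case 0 then show ?thesis by (simp add: Ldag_mat2 algebra_simps)
  next
    case (Suc m)
    show ?thesis using Suc.IH \<open>n = Suc m\<close> by (simp add: Ldag_mat2; simp add: algebra_simps)
  qed
qed

lemma sum_mat2: "(\<Sum>i\<in>S. mat2 (f i) (g i) (h i) (k i)) = mat2 (\<Sum>i\<in>S. f i) (\<Sum>i\<in>S. g i) (\<Sum>i\<in>S. h i) (\<Sum>i\<in>S. k i)"
  by (subst mat2_eq) (simp add: mat2_nth)

lemma mat2_sums: assumes "f sums A" "g sums B" "h sums C" "k sums D"
  shows "(\<lambda>n. mat2 (f n) (g n) (h n) (k n)) sums mat2 A B C D"
  using assms unfolding sums_def sum_mat2 unfolding mat2_def
  by (auto intro!: tendsto_vec_lambda)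

definition FF :: "real \<Rightarrow> real \<Rightarrow> real" where
  "FF G t = (if G = 0 then t else (1 - exp (-G*t))/G)"

lemma FF_sums: "(\<lambda>n. if n = 0 then 0 else t^n / fact n * (-G)^(n-1)) sums FF G t"
proof (cases "G = 0")
  case True
  have "(\<lambda>n. if n = 0 then 0 else t^n / fact n * (-G)^(n-1)) = (\<lambda>n. if n = 1 then t else 0)"
    using True by (auto simp: fun_eq_iff)
  then show ?thesis using True sums_single[of 1 "\<lambda>_. t"] by (simp add: FF_def)
next
  case False
  have e: "(\<lambda>n. (-G*t)^n /\<^sub>R fact n) sums exp (-G*t)" by (rule exp_converges)
  have e2: "(\<lambda>n. (-G*t)^n /\<^sub>R fact n - (if n = 0 then 1 else 0)) sums (exp (-G*t) - 1)"
    using sums_diff[OF e sums_single[of 0 "\<lambda>_. 1::real"]] by simp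
  have "(\<lambda>n. ((-G*t)^n /\<^sub>R fact n - (if n = 0 then 1 else 0)) / (-G)) sums ((exp (-G*t) - 1) / (-G))"
    by (rule sums_divide[OF e2])
  moreover have "(\<lambda>n. ((-G*t)^n /\<^sub>R fact n - (if n = 0 then 1 else 0)) / (-G)) =
       (\<lambda>n. if n = 0 then 0 else t^n / fact n * (-G)^(n-1))"
  proof
    fix n :: nat
    show "((-G*t)^n /\<^sub>R fact n - (if n = 0 then 1 else 0)) / (-G) = (if n = 0 then 0 else t^n / fact n * (-G)^(n-1))"
    proof (cases n)
      case (Suc m)
      have "(-G*t)^n = (-G) * ((-G)^m * t^n)" unfolding Suc power_mult_distrib by simp
      then show ?thesis using False Suc by (simp add: divide_simps mult.commute)
    qed simp
  qed
  ultimately have "(\<lambda>n. if n = 0 then 0 else t^n / fact n * (-G)^(n-1)) sums ((exp (-G*t) - 1) / (-G))"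
    by (simp only:)
  moreover have "(exp (-G*t) - 1) / (-G) = FF G t" using False by (simp add: FF_def field_simps)
  ultimately show ?thesis by simp
qed


definition Phi :: "real \<Rightarrow> real \<Rightarrow> real \<Rightarrow> real \<Rightarrow> real \<Rightarrow> cmat2 \<Rightarrow> cmat2" where
  "Phi \<omega> gp gm gz t X = mat2 (X$1$1 - of_real (gm * FF (gp+gm) t) * (X$1$1 - X$2$2))
     (exp (of_real t * lam \<omega> gp gm gz) * X$1$2) (cnj (exp (of_real t * lam \<omega> gp gm gz)) * X$2$1)
     (X$2$2 + of_real (gp * FF (gp+gm) t) * (X$1$1 - X$2$2))"

lemma expmap_eq: "expmap t (Ldag \<omega> gp gm gz) X = Phi \<omega> gp gm gz t X"
proof -
  define a b c d where "a = X$1$1" "b = X$1$2" "c = X$2$1" "d = X$2$2"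
  have X: "X = mat2 a b c d" unfolding a_b_c_d_def by (rule mat2_eq)
  define l where "l = lam \<omega> gp gm gz"
  define G where "G = gp + gm"
  define ff where "ff = (\<lambda>n::nat. if n = 0 then 0 else t^n / fact n * (-G)^(n-1))"
  have terms: "(\<lambda>n. (t ^ n / fact n) *\<^sub>R ((Ldag \<omega> gp gm gz ^^ n) X)) =
    (\<lambda>n. mat2 ((if n = 0 then a else 0) + of_real (ff n) * (- gm * (a - d)))
       ((of_real t * l)^n /\<^sub>R fact n * b) ((of_real t * cnj l)^n /\<^sub>R fact n * c)
       ((if n = 0 then d else 0) + of_real (ff n) * (gp * (a - d))))"
  proof
    fix n :: nat
    show "(t ^ n / fact n) *\<^sub>R ((Ldag \<omega> gp gm gz ^^ n) X) = mat2 ((if n = 0 then a else 0) + of_real (ff n) * (- gm * (a - d)))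
       ((of_real t * l)^n /\<^sub>R fact n * b) ((of_real t * cnj l)^n /\<^sub>R fact n * c)
       ((if n = 0 then d else 0) + of_real (ff n) * (gp * (a - d)))"
      unfolding X Lpow mat2_scaleR mat2_inj ff_def l_def G_def
      by (cases "n = 0") (simp_all add: scaleR_conv_of_real power_mult_distrib divide_inverse algebra_simps)
  qed
  have s1: "(\<lambda>n. (if n = 0 then a else 0) + of_real (ff n) * (- gm * (a - d))) sums (a + of_real (FF G t) * (- gm * (a - d)))"
    apply (rule sums_add)
    using sums_single[of 0 "\<lambda>_. a"] apply simp
    apply (rule sums_mult2)
    unfolding sums_of_real_iff ff_def by (rule FF_sums)
  have s4: "(\<lambda>n. (if n = 0 then d else 0) + of_real (ff n) * (gp * (a - d))) sums (d + of_real (FF G t) * (gp * (a - d)))"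
    apply (rule sums_add)
    using sums_single[of 0 "\<lambda>_. d"] apply simp
    apply (rule sums_mult2)
    unfolding sums_of_real_iff ff_def by (rule FF_sums)
  have s2: "(\<lambda>n. (of_real t * l)^n /\<^sub>R fact n * b) sums (exp (of_real t * l) * b)"
    by (rule sums_mult2[OF exp_converges])
  have s3: "(\<lambda>n. (of_real t * cnj l)^n /\<^sub>R fact n * c) sums (cnj (exp (of_real t * l)) * c)"
  proof -
    have "(\<lambda>n. (of_real t * cnj l)^n /\<^sub>R fact n * c) sums (exp (of_real t * cnj l) * c)"
      by (rule sums_mult2[OF exp_converges])
    moreover have "exp (of_real t * cnj l) = cnj (exp (of_real t * l))" by (simp add: exp_cnj)
    ultimately show ?thesis by simp
  qed
  have "expmap t (Ldag \<omega> gp gm gz) X = mat2 (a + of_real (FF G t) * (- gm * (a - d))) (exp (of_real t * l) * b)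
     (cnj (exp (of_real t * l)) * c) (d + of_real (FF G t) * (gp * (a - d)))"
    unfolding expmap_def terms by (rule sums_unique[symmetric], rule mat2_sums[OF s1 s2 s3 s4])
  then show ?thesis unfolding Phi_def a_b_c_d_def[symmetric] l_def G_def by (simp add: mat2_inj algebra_simps)
qed

lemma pair_ineq:
  fixes a b c d m n :: real
  assumes "0 \<le> a" "0 \<le> b" "0 \<le> c" "0 \<le> d" "m^2 \<le> a*c" "n^2 \<le> b*d"
  shows "2*m*n \<le> a*d + b*c"
proof -
  have "(2*m*n)^2 = 4 * m^2 * n^2" by (simp add: power_mult_distrib)
  also have "\<dots> \<le> 4 * (a*c) * (b*d)"
    using assms by (intro mult_mono) (auto intro: mult_left_mono)
  also have "\<dots> \<le> (a*d + b*c)^2"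
  proof -
    have "0 \<le> (a*d - b*c)^2" by simp
    then show ?thesis by (simp add: power2_eq_square algebra_simps)
  qed
  finally have "(2*m*n)^2 \<le> (a*d + b*c)^2" .
  moreover have "0 \<le> a*d + b*c" using assms by simp
  ultimately have "\<bar>2*m*n\<bar> \<le> a*d + b*c" using abs_le_square_iff by (metis abs_of_nonneg)
  then show ?thesis by simp
qed

lemma cs3:
  fixes a1 a2 a3 c1 c2 c3 m1 m2 m3 :: real
  assumes "0 \<le> a1" "0 \<le> a2" "0 \<le> a3" "0 \<le> c1" "0 \<le> c2" "0 \<le> c3"
    "m1^2 \<le> a1*c1" "m2^2 \<le> a2*c2" "m3^2 \<le> a3*c3"
  shows "(m1+m2+m3)^2 \<le> (a1+a2+a3)*(c1+c2+c3)"
proof -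
  have "2*m1*m2 \<le> a1*c2 + a2*c1" by (rule pair_ineq) (use assms in auto)
  moreover have "2*m1*m3 \<le> a1*c3 + a3*c1" by (rule pair_ineq) (use assms in auto)
  moreover have "2*m2*m3 \<le> a2*c3 + a3*c2" by (rule pair_ineq) (use assms in auto)
  ultimately show ?thesis using assms(7-9) by (simp add: power2_eq_square algebra_simps)
qed

lemma key_real:
  fixes P Q K X Y Z :: real
  assumes "0 \<le> Q" "Q \<le> P" "0 \<le> K" "K^2 \<le> 1 - P"
  shows "K^2 * X^2 * (P*Y + Q*Z)^2 \<le>
     (P*(1-P)*X^2 + (1-P-K^2)*Z^2 + P*Y^2) * (Q*(1-Q)*X^2 + Q*Z^2 + (1-Q-K^2)*Y^2)"
proof -
  have P1: "P \<le> 1" using assms by (smt (verit) zero_le_power2)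
  have h1: "0 \<le> P*(1-Q) - Q*K^2"
  proof -
    have "Q*K^2 \<le> Q*(1-P)" using assms by (simp add: mult_left_mono)
    then show ?thesis using assms by (smt (verit, best) mult.commute mult_right_mono right_diff_distrib')
  qed
  have h2: "0 \<le> 1 - P - K^2" using assms by simp
  have a1: "0 \<le> (P*(1-P) - K^2*Q) * X^2"
  proof -
    have "K^2*Q \<le> (1-P)*Q" using assms by (simp add: mult_right_mono)
    also have "\<dots> \<le> (1-P)*P" using assms P1 by (simp add: mult_left_mono)
    finally have "0 \<le> P*(1-P) - K^2*Q" by (simp add: algebra_simps)
    then show ?thesis by simp
  qed
  have c1: "0 \<le> (1-Q-K^2)*Y^2" using assms by simp
  have m1: "(K*(P-Q)*X*Y)^2 \<le> ((P*(1-P) - K^2*Q) * X^2) * ((1-Q-K^2)*Y^2)"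
  proof -
    have e: "((P*(1-P) - K^2*Q) * X^2) * ((1-Q-K^2)*Y^2) - (K*(P-Q)*X*Y)^2
        = (1 - P - K^2) * (P*(1-Q) - Q*K^2) * (X^2 * Y^2)"
      by (simp add: power2_eq_square algebra_simps)
    have "0 \<le> (1 - P - K^2) * (P*(1-Q) - Q*K^2) * (X^2 * Y^2)" using h1 h2 by simp
    then show ?thesis using e by simp
  qed
  have a2: "0 \<le> P*Y^2" and c2: "0 \<le> Q*(1-Q)*X^2" using assms P1 by auto
  have m2: "(K*Q*X*Y)^2 \<le> (P*Y^2) * (Q*(1-Q)*X^2)"
  proof -
    have e: "(P*Y^2) * (Q*(1-Q)*X^2) - (K*Q*X*Y)^2 = Q * (P*(1-Q) - Q*K^2) * (X^2*Y^2)"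
      by (simp add: power2_eq_square algebra_simps)
    have "0 \<le> Q * (P*(1-Q) - Q*K^2) * (X^2*Y^2)" using h1 assms by simp
    then show ?thesis using e by simp
  qed
  have a3: "0 \<le> K^2*Q*X^2" and c3: "0 \<le> Q*Z^2" using assms by auto
  have m3: "(K*Q*X*Z)^2 \<le> (K^2*Q*X^2) * (Q*Z^2)" by (simp add: power2_eq_square algebra_simps)
  have cs: "(K*(P-Q)*X*Y + K*Q*X*Y + K*Q*X*Z)^2 \<le>
     ((P*(1-P) - K^2*Q) * X^2 + P*Y^2 + K^2*Q*X^2) * ((1-Q-K^2)*Y^2 + Q*(1-Q)*X^2 + Q*Z^2)"
    by (rule cs3[OF a1 a2 a3 c1 c2 c3 m1 m2 m3])
  have l: "(K*(P-Q)*X*Y + K*Q*X*Y + K*Q*X*Z)^2 = K^2 * X^2 * (P*Y + Q*Z)^2"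
    by (simp add: power2_eq_square algebra_simps)
  have C0: "0 \<le> (1-Q-K^2)*Y^2 + Q*(1-Q)*X^2 + Q*Z^2" using c1 c2 c3 by simp
  have "((P*(1-P) - K^2*Q) * X^2 + P*Y^2 + K^2*Q*X^2) * ((1-Q-K^2)*Y^2 + Q*(1-Q)*X^2 + Q*Z^2)
     \<le> (P*(1-P)*X^2 + (1-P-K^2)*Z^2 + P*Y^2) * ((1-Q-K^2)*Y^2 + Q*(1-Q)*X^2 + Q*Z^2)"
  proof (rule mult_right_mono[OF _ C0])
    have "0 \<le> (1-P-K^2)*Z^2" using h2 by simp
    then show "(P*(1-P) - K^2*Q) * X^2 + P*Y^2 + K^2*Q*X^2 \<le> P*(1-P)*X^2 + (1-P-K^2)*Z^2 + P*Y^2"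
      by (simp add: algebra_simps)
  qed
  then show ?thesis using cs l by (simp add: algebra_simps)
qed

lemma ofr_cmod_sq: "(complex_of_real (cmod z))^2 = z * cnj z"
  using complex_norm_square[of z] by simp

lemma amgm2:
  fixes a c m X Y :: real
  assumes "0 \<le> a" "0 \<le> c" "m^2 \<le> a*c"
  shows "2*m*X*Y \<le> a*X^2 + c*Y^2"
proof -
  have "(m*X*Y)^2 \<le> (a*X^2)*(c*Y^2)"
  proof -
    have "(m*X*Y)^2 = m^2 * (X^2*Y^2)" by (simp add: power_mult_distrib)
    also have "\<dots> \<le> (a*c) * (X^2*Y^2)" using assms by (intro mult_right_mono) auto
    finally show ?thesis by (simp add: algebra_simps)
  qed
  then have "2*(m*X*Y)*1 \<le> (a*X^2)*1 + 1*(c*Y^2)"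
    by (intro pair_ineq) (use assms in auto)
  then show ?thesis by simp
qed

lemma psd_herm:
  fixes a c :: real
  assumes "0 \<le> a" "0 \<le> c" "(cmod z)^2 \<le> a*c"
  shows "psd (mat2 (of_real a) z (cnj z) (of_real c))"
  unfolding psd_def Let_def
proof
  fix v :: "complex^2"
  define x y where "x = v$1" "y = v$2"
  define w where "w = cnj x * z * y"
  have q: "(\<Sum>i\<in>UNIV. \<Sum>j\<in>UNIV. cnj (v$i) * mat2 (of_real a) z (cnj z) (of_real c) $i$j * v$j)
     = of_real (a * (cmod x)^2 + c * (cmod y)^2 + 2 * Re w)"
  proof -
    have "(\<Sum>i\<in>UNIV. \<Sum>j\<in>UNIV. cnj (v$i) * mat2 (of_real a) z (cnj z) (of_real c) $i$j * v$j)
       = of_real (a * (cmod x)^2) + of_real (c * (cmod y)^2) + (w + cnj w)"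
      unfolding sum_2 mat2_nth x_y_def[symmetric]
      by (simp add: ofr_cmod_sq w_def; simp add: algebra_simps)
    also have "\<dots> = of_real (a * (cmod x)^2 + c * (cmod y)^2 + 2 * Re w)"
      unfolding complex_add_cnj by simp
    finally show ?thesis .
  qed
  have "- Re w \<le> cmod w" using abs_Re_le_cmod[of w] by simp
  also have "cmod w = cmod z * cmod x * cmod y" by (simp add: w_def norm_mult)
  finally have r: "- Re w \<le> cmod z * cmod x * cmod y" .
  have "2 * cmod z * cmod x * cmod y \<le> a * (cmod x)^2 + c * (cmod y)^2"
    using assms by (intro amgm2) auto
  with r show "Im (\<Sum>i\<in>UNIV. \<Sum>j\<in>UNIV. cnj (v$i) * mat2 (of_real a) z (cnj z) (of_real c) $i$j * v$j) = 0 \<and>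
      0 \<le> Re (\<Sum>i\<in>UNIV. \<Sum>j\<in>UNIV. cnj (v$i) * mat2 (of_real a) z (cnj z) (of_real c) $i$j * v$j)"
    unfolding q by simp
qed

lemma psd_diag:
  assumes "psd M" shows "0 \<le> Re (M$1$1)" "0 \<le> Re (M$2$2)"
proof -
  have "let q = (\<Sum>i\<in>UNIV. \<Sum>j\<in>UNIV. cnj ((\<chi> k. if k = 1 then (1::complex) else 0)$i) * M$i$j * (\<chi> k. if k = 1 then (1::complex) else 0)$j) in Im q = 0 \<and> Re q \<ge> 0"
    using assms unfolding psd_def by blast
  then show "0 \<le> Re (M$1$1)" by (simp add: sum_2 Let_def)
  have "let q = (\<Sum>i\<in>UNIV. \<Sum>j\<in>UNIV. cnj ((\<chi> k. if k = 2 then (1::complex) else 0)$i) * M$i$j * (\<chi> k. if k = 2 then (1::complex) else 0)$j) in Im q = 0 \<and> Re q \<ge> 0"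
    using assms unfolding psd_def by blast
  then show "0 \<le> Re (M$2$2)" by (simp add: sum_2 Let_def)
qed

definition Psi :: "real \<Rightarrow> real \<Rightarrow> complex \<Rightarrow> cmat2 \<Rightarrow> cmat2" where
  "Psi P Q k X = mat2 (X$1$1 - of_real P * (X$1$1 - X$2$2)) (k * X$1$2) (cnj k * X$2$1) (X$2$2 + of_real Q * (X$1$1 - X$2$2))"

lemma Psi_mat2: "Psi P Q k (mat2 a b c d) = mat2 (a - of_real P * (a - d)) (k * b) (cnj k * c) (d + of_real Q * (a - d))"
  by (simp add: Psi_def mat2_nth)

lemma D_eq0:
  "Psi P Q k (adj (mat2 a b c d) ** mat2 a b c d) - adj (Psi P Q k (mat2 a b c d)) ** Psi P Q k (mat2 a b c d) =
    mat2 (of_real (P*(1-P)*(cmod (a - d))^2 + (1-P-(cmod k)^2)*(cmod c)^2 + P*(cmod b)^2))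
         (k * (of_real P * cnj (a - d) * b - of_real Q * cnj c * (a - d)))
         (cnj (k * (of_real P * cnj (a - d) * b - of_real Q * cnj c * (a - d))))
         (of_real (Q*(1-Q)*(cmod (a - d))^2 + Q*(cmod c)^2 + (1-Q-(cmod k)^2)*(cmod b)^2))"
  unfolding mat2_adj mat2_mult Psi_mat2 mat2_diff mat2_inj
  apply (intro conjI)
  subgoal by (simp add: ofr_cmod_sq; simp add: algebra_simps)
  subgoal by (simp; simp add: algebra_simps)
  subgoal by (simp; simp add: algebra_simps)
  subgoal by (simp add: ofr_cmod_sq; simp add: algebra_simps)
  done

lemma psd_Psi:
  assumes P0: "0 \<le> P" and Q0: "0 \<le> Q" and kP: "(cmod k)^2 \<le> 1 - P" and kQ: "(cmod k)^2 \<le> 1 - Q"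
  shows "psd (Psi P Q k (adj X ** X) - adj (Psi P Q k X) ** Psi P Q k X)"
proof -
  define a b c d where "a = X$1$1" "b = X$1$2" "c = X$2$1" "d = X$2$2"
  have X: "X = mat2 a b c d" unfolding a_b_c_d_def by (rule mat2_eq)
  define K where "K = cmod k"
  define u where "u = a - d"
  define z where "z = k * (of_real P * cnj u * b - of_real Q * cnj c * u)"
  define A where "A = P*(1-P)*(cmod u)^2 + (1-P-K^2)*(cmod c)^2 + P*(cmod b)^2"
  define C where "C = Q*(1-Q)*(cmod u)^2 + Q*(cmod c)^2 + (1-Q-K^2)*(cmod b)^2"
  have K0: "0 \<le> K" by (simp add: K_def)
  have P1: "P \<le> 1" using kP by (smt (verit) zero_le_power2)
  have Q1: "Q \<le> 1" using kQ by (smt (verit) zero_le_power2)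
  have A0: "0 \<le> A" unfolding A_def using P0 P1 kP K_def by (intro add_nonneg_nonneg mult_nonneg_nonneg) auto
  have C0: "0 \<le> C" unfolding C_def using Q0 Q1 kQ K_def by (intro add_nonneg_nonneg mult_nonneg_nonneg) auto
  have zb: "cmod z \<le> K * (P * cmod u * cmod b + Q * cmod c * cmod u)"
  proof -
    have "cmod (of_real P * cnj u * b - of_real Q * cnj c * u) \<le> cmod (of_real P * cnj u * b) + cmod (of_real Q * cnj c * u)"
      by (rule norm_triangle_ineq4)
    also have "\<dots> = P * cmod u * cmod b + Q * cmod c * cmod u"
      using P0 Q0 by (simp add: norm_mult)
    finally show ?thesis unfolding z_def K_def norm_mult by (intro mult_left_mono) auto
  qed
  have z0: "0 \<le> cmod z" by simp
  have zsq: "(cmod z)^2 \<le> K^2 * (cmod u)^2 * (P * cmod b + Q * cmod c)^2"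
  proof -
    have "(cmod z)^2 \<le> (K * (P * cmod u * cmod b + Q * cmod c * cmod u))^2"
      using zb z0 by (intro power_mono) auto
    also have "\<dots> = K^2 * (cmod u)^2 * (P * cmod b + Q * cmod c)^2"
      by (simp add: power2_eq_square algebra_simps)
    finally show ?thesis .
  qed
  have key: "K^2 * (cmod u)^2 * (P * cmod b + Q * cmod c)^2 \<le> A * C"
  proof (cases "Q \<le> P")
    case True
    show ?thesis unfolding A_def C_def
      by (rule key_real) (use True Q0 K0 kP K_def in auto)
  next
    case False
    have "K^2 * (cmod u)^2 * (Q * cmod c + P * cmod b)^2 \<le>
      (Q*(1-Q)*(cmod u)^2 + (1-Q-K^2)*(cmod b)^2 + Q*(cmod c)^2) * (P*(1-P)*(cmod u)^2 + P*(cmod b)^2 + (1-P-K^2)*(cmod c)^2)"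
      by (rule key_real) (use False P0 K0 kQ K_def in auto)
    then show ?thesis unfolding A_def C_def by (simp add: algebra_simps)
  qed
  have "psd (mat2 (of_real A) z (cnj z) (of_real C))"
    by (rule psd_herm[OF A0 C0]) (use zsq key in linarith)
  then show ?thesis unfolding X D_eq0 A_def C_def z_def u_def K_def .
qed

lemma Phi_Psi: "Phi \<omega> gp gm gz t = Psi (gm * FF (gp+gm) t) (gp * FF (gp+gm) t) (exp (of_real t * lam \<omega> gp gm gz))"
  by (simp add: fun_eq_iff Phi_def Psi_def)

lemma expmap_Psi: "expmap t (Ldag \<omega> gp gm gz) = Psi (gm * FF (gp+gm) t) (gp * FF (gp+gm) t) (exp (of_real t * lam \<omega> gp gm gz))"
  using expmap_eq Phi_Psi by (metis ext)

lemma Psi_clinear: "clinear_map (Psi P Q k)"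
  unfolding clinear_map_def
proof (intro allI)
  fix c :: complex and X Y :: cmat2
  obtain a b c' d where X: "X = mat2 a b c' d" using mat2_eq by blast
  obtain a2 b2 c2 d2 where Y: "Y = mat2 a2 b2 c2 d2" using mat2_eq by blast
  show "Psi P Q k (csc c X + Y) = csc c (Psi P Q k X) + Psi P Q k Y"
    unfolding X Y mat2_csc mat2_add Psi_mat2 mat2_inj by (simp add: algebra_simps)
qed

lemma Psi_one: "Psi P Q k (mat 1) = mat 1"
  by (simp add: mat2_one Psi_mat2)

lemma Psi_unital:
  assumes "0 \<le> P" "0 \<le> Q" "(cmod k)^2 \<le> 1 - P" "(cmod k)^2 \<le> 1 - Q"
  shows "unital_schwarz (Psi P Q k)"
  unfolding unital_schwarz_def using Psi_clinear Psi_one psd_Psi[OF assms] by blast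

lemma Kexp: "(cmod (exp (of_real t * lam \<omega> gp gm gz)))^2 = exp (-(gp+gm+4*gz)*t)"
proof -
  have "Re (of_real t * lam \<omega> gp gm gz) = t * (-(gp+gm)/2 - 2*gz)" by (simp add: lam_def field_simps)
  then have "(cmod (exp (of_real t * lam \<omega> gp gm gz)))^2 = exp (t * (-(gp+gm)/2 - 2*gz))^2" by simp
  also have "\<dots> = exp (2 * (t * (-(gp+gm)/2 - 2*gz)))" by (simp add: exp_double)
  also have "2 * (t * (-(gp+gm)/2 - 2*gz)) = -(gp+gm+4*gz)*t" by (simp add: field_simps)
  finally show ?thesis .
qed

lemma conv_bound:
  fixes g G t :: real
  assumes "0 < G" "0 \<le> g" "g \<le> G" "0 \<le> t"
  shows "exp (-g*t) \<le> 1 - g * FF G t"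
proof -
  define m where "m = g / G"
  have m0: "0 \<le> m" "m \<le> 1" using assms by (auto simp: m_def)
  have c: "exp ((1 - m) *\<^sub>R 0 + m *\<^sub>R (-G*t)) \<le> (1 - m) * exp 0 + m * exp (-G*t)"
    by (rule convex_onD[OF exp_convex]) (use m0 in auto)
  have e1: "(1 - m) *\<^sub>R 0 + m *\<^sub>R (-G*t) = -g*t" using assms by (simp add: m_def)
  have e2: "(1 - m) * exp 0 + m * exp (-G*t) = 1 - g * FF G t"
    using assms by (simp add: m_def FF_def field_simps)
  from c show ?thesis unfolding e1 e2 .
qed

lemma FF_nonneg: assumes "0 \<le> G" "0 \<le> t" shows "0 \<le> FF G t"
  using assms by (auto simp: FF_def)

lemma suff_bounds:
  assumes "0 \<le> gp" "0 \<le> gm" "0 \<le> gp + 4*gz" "0 \<le> gm + 4*gz" "0 \<le> t"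
  shows "0 \<le> gm * FF (gp+gm) t" "0 \<le> gp * FF (gp+gm) t"
    "exp (-(gp+gm+4*gz)*t) \<le> 1 - gm * FF (gp+gm) t"
    "exp (-(gp+gm+4*gz)*t) \<le> 1 - gp * FF (gp+gm) t"
proof -
  have F0: "0 \<le> FF (gp+gm) t" using assms by (intro FF_nonneg) auto
  then show "0 \<le> gm * FF (gp+gm) t" "0 \<le> gp * FF (gp+gm) t" using assms by auto
  show "exp (-(gp+gm+4*gz)*t) \<le> 1 - gm * FF (gp+gm) t"
  proof (cases "gp + gm = 0")
    case True
    then have "gm = 0" "gp = 0" using assms by auto
    then show ?thesis using assms by simp
  next
    case False
    then have G: "0 < gp + gm" using assms by auto
    have "exp (-(gp+gm+4*gz)*t) \<le> exp (-gm*t)" using assms by (intro exp_mono mult_right_mono) auto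
    also have "\<dots> \<le> 1 - gm * FF (gp+gm) t" by (rule conv_bound) (use G assms in auto)
    finally show ?thesis .
  qed
  show "exp (-(gp+gm+4*gz)*t) \<le> 1 - gp * FF (gp+gm) t"
  proof (cases "gp + gm = 0")
    case True
    then have "gm = 0" "gp = 0" using assms by auto
    then show ?thesis using assms by simp
  next
    case False
    then have G: "0 < gp + gm" using assms by auto
    have "exp (-(gp+gm+4*gz)*t) \<le> exp (-gp*t)" using assms by (intro exp_mono mult_right_mono) auto
    also have "\<dots> \<le> 1 - gp * FF (gp+gm) t" by (rule conv_bound) (use G assms in auto)
    finally show ?thesis .
  qed
qed

lemma FF_pos: "0 < FF G 1"
proof (cases "G = 0")
  case True then show ?thesis by (simp add: FF_def)
next
  case False
  show ?thesis
  proof (cases "G > 0")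
    case True
    then have "exp (-G) < 1" by simp
    then show ?thesis using True by (simp add: FF_def)
  next
    case f: False
    then have "G < 0" using False by simp
    then have "exp (-G) > 1" by simp
    then show ?thesis using \<open>G < 0\<close> by (simp add: FF_def divide_neg_neg)
  qed
qed

lemma N1:
  fixes gp gm gz :: real
  assumes "0 \<le> gp" "0 \<le> gm" "gm + 4*gz < 0"
  shows "\<exists>t\<ge>0. 1 - gp * FF (gp+gm) t - exp (-(gp+gm+4*gz)*t) < 0"
proof (cases "gp + gm = 0")
  case True
  then have "gp = 0" "gm = 0" using assms by auto
  then have "1 < exp (-(gp+gm+4*gz)*1)" using assms by simp
  then show ?thesis using \<open>gp = 0\<close> by (intro exI[of _ 1]) auto
next
  case False
  define G where "G = gp + gm"
  define \<delta> where "\<delta> = -(gm + 4*gz)"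
  have G0: "0 < G" using False assms by (auto simp: G_def)
  have d0: "0 < \<delta>" using assms by (simp add: \<delta>_def)
  define t where "t = \<delta> / (gp*G + 1)"
  have gG: "0 \<le> gp*G" using assms G0 by simp
  have t0: "0 < t" using d0 gG by (simp add: t_def)
  have h1: "gp*G*t < \<delta>"
  proof -
    have "gp*G*t = \<delta> * (gp*G) / (gp*G + 1)" by (simp add: t_def)
    also have "\<dots> < \<delta>" using d0 gG by (simp add: divide_simps)
    finally show ?thesis .
  qed
  have ex: "-(gp+gm+4*gz) = \<delta> - gp" by (simp add: \<delta>_def)
  have e1: "1 + (\<delta> - gp)*t \<le> exp ((\<delta> - gp)*t)" by (rule exp_ge_add_one_self)
  have e2: "exp (-G*t) * (1 + G*t) \<le> 1"
  proof -
    have "1 + G*t \<le> exp (G*t)" by (rule exp_ge_add_one_self)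
    then have "exp (-G*t) * (1 + G*t) \<le> exp (-G*t) * exp (G*t)" by (intro mult_left_mono) auto
    also have "\<dots> = 1" by (simp add: exp_add[symmetric])
    finally show ?thesis .
  qed
  have pos: "0 < 1 + G*t" using G0 t0 by (smt (verit) mult_pos_pos)
  have ff: "t / (1 + G*t) \<le> FF G t"
  proof -
    have "G * t \<le> (1 - exp (-G*t)) * (1 + G*t)" using e2 by (simp add: algebra_simps)
    then have "G * t / (1 + G*t) \<le> 1 - exp (-G*t)" using pos by (simp add: divide_simps)
    then have "G * (t / (1 + G*t)) \<le> G * FF G t" using G0 by (simp add: FF_def)
    then show ?thesis using G0 by (rule mult_left_le_imp_le)
  qed
  have ff2: "gp * (t / (1 + G*t)) \<le> gp * FF G t" using ff assms by (intro mult_left_mono) auto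
  have key: "gp * t - gp * (t / (1 + G*t)) < \<delta> * t"
  proof -
    have "gp * t - gp * (t / (1 + G*t)) = (gp*G*t) * (t / (1 + G*t))" using pos by (simp add: field_simps)
    also have "\<dots> \<le> (gp*G*t) * t"
    proof (rule mult_left_mono)
      show "t / (1 + G*t) \<le> t" using pos t0 G0 by (simp add: divide_simps)
      show "0 \<le> gp*G*t" using gG t0 by simp
    qed
    also have "\<dots> < \<delta> * t" using h1 t0 by simp
    finally show ?thesis .
  qed
  have ee: "exp (-(gp+gm+4*gz)*t) = exp ((\<delta> - gp)*t)" using ex by simp
  have e1': "1 + \<delta>*t - gp*t \<le> exp ((\<delta> - gp)*t)" using e1 by (simp add: algebra_simps)
  have "1 - gp * FF G t - exp ((\<delta> - gp)*t) < 0" using e1' ff2 key by linarith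
  then have "1 - gp * FF (gp+gm) t - exp (-(gp+gm+4*gz)*t) < 0" unfolding ee G_def .
  then show ?thesis using t0 by (intro exI[of _ t]) auto
qed

theorem mainTheorem8:
  fixes \<omega> gp gm gz :: real
  shows "(\<forall>t\<ge>0. unital_schwarz (expmap t (Ldag \<omega> gp gm gz))) \<longleftrightarrow>
         (gp \<ge> 0 \<and> gm \<ge> 0 \<and> gp + 4 * gz \<ge> 0 \<and> gm + 4 * gz \<ge> 0)"
proof
  assume c: "gp \<ge> 0 \<and> gm \<ge> 0 \<and> gp + 4 * gz \<ge> 0 \<and> gm + 4 * gz \<ge> 0"
  show "\<forall>t\<ge>0. unital_schwarz (expmap t (Ldag \<omega> gp gm gz))"
  proof (intro allI impI)
    fix t :: real assume t: "0 \<le> t"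
    note b = suff_bounds[of gp gm gz t]
    show "unital_schwarz (expmap t (Ldag \<omega> gp gm gz))"
      unfolding expmap_Psi
      apply (rule Psi_unital)
      apply (unfold Kexp)
      using b c t by auto
  qed
next
  assume H: "\<forall>t\<ge>0. unital_schwarz (expmap t (Ldag \<omega> gp gm gz))"
  define Pt where "Pt t = gm * FF (gp+gm) t" for t
  define Qt where "Qt t = gp * FF (gp+gm) t" for t
  define kt where "kt t = exp (of_real t * lam \<omega> gp gm gz)" for t
  have D: "psd (Psi (Pt t) (Qt t) (kt t) (adj X ** X) - adj (Psi (Pt t) (Qt t) (kt t) X) ** Psi (Pt t) (Qt t) (kt t) X)"
    if "0 \<le> t" for t X
    using H that unfolding unital_schwarz_def expmap_Psi Pt_def Qt_def kt_def by blast
  have k2: "(cmod (kt t))^2 = exp (-(gp+gm+4*gz)*t)" for t unfolding kt_def by (rule Kexp)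
  have d1: "0 \<le> Pt t * (1 - Pt t)" "0 \<le> Qt t * (1 - Qt t)" if "0 \<le> t" for t
  proof -
    have p: "psd (Psi (Pt t) (Qt t) (kt t) (adj (mat2 1 0 0 0) ** mat2 1 0 0 0) - adj (Psi (Pt t) (Qt t) (kt t) (mat2 1 0 0 0)) ** Psi (Pt t) (Qt t) (kt t) (mat2 1 0 0 0))"
      by (rule D[OF that])
    show "0 \<le> Pt t * (1 - Pt t)" using psd_diag(1)[OF p] unfolding D_eq0 mat2_nth by simp
    show "0 \<le> Qt t * (1 - Qt t)" using psd_diag(2)[OF p] unfolding D_eq0 mat2_nth by simp
  qed
  have d2: "0 \<le> 1 - Qt t - exp (-(gp+gm+4*gz)*t)" if "0 \<le> t" for t
  proof -
    have p: "psd (Psi (Pt t) (Qt t) (kt t) (adj (mat2 0 1 0 0) ** mat2 0 1 0 0) - adj (Psi (Pt t) (Qt t) (kt t) (mat2 0 1 0 0)) ** Psi (Pt t) (Qt t) (kt t) (mat2 0 1 0 0))"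
      by (rule D[OF that])
    show ?thesis using psd_diag(2)[OF p] unfolding D_eq0 mat2_nth k2 by simp
  qed
  have d3: "0 \<le> 1 - Pt t - exp (-(gp+gm+4*gz)*t)" if "0 \<le> t" for t
  proof -
    have p: "psd (Psi (Pt t) (Qt t) (kt t) (adj (mat2 0 0 1 0) ** mat2 0 0 1 0) - adj (Psi (Pt t) (Qt t) (kt t) (mat2 0 0 1 0)) ** Psi (Pt t) (Qt t) (kt t) (mat2 0 0 1 0))"
      by (rule D[OF that])
    show ?thesis using psd_diag(1)[OF p] unfolding D_eq0 mat2_nth k2 by simp
  qed
  have F1: "0 < FF (gp+gm) 1" by (rule FF_pos)
  have gm0: "0 \<le> gm"
  proof (rule ccontr)
    assume "\<not> 0 \<le> gm"
    then have "Pt 1 < 0" using F1 by (simp add: Pt_def mult_neg_pos)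
    then have "Pt 1 * (1 - Pt 1) < 0" by (simp add: mult_neg_pos)
    with d1(1)[of 1] show False by simp
  qed
  have gp0: "0 \<le> gp"
  proof (rule ccontr)
    assume "\<not> 0 \<le> gp"
    then have "Qt 1 < 0" using F1 by (simp add: Qt_def mult_neg_pos)
    then have "Qt 1 * (1 - Qt 1) < 0" by (simp add: mult_neg_pos)
    with d1(2)[of 1] show False by simp
  qed
  have c3: "0 \<le> gm + 4*gz"
  proof (rule ccontr)
    assume "\<not> 0 \<le> gm + 4*gz"
    then have "gm + 4*gz < 0" by simp
    from N1[OF gp0 gm0 this] obtain t where "0 \<le> t" "1 - gp * FF (gp+gm) t - exp (-(gp+gm+4*gz)*t) < 0"
      by blast
    with d2[of t] show False by (simp add: Qt_def)
  qed
  have c4: "0 \<le> gp + 4*gz"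
  proof (rule ccontr)
    assume "\<not> 0 \<le> gp + 4*gz"
    then have "gp + 4*gz < 0" by simp
    from N1[OF gm0 gp0 this] obtain t where "0 \<le> t" "1 - gm * FF (gm+gp) t - exp (-(gm+gp+4*gz)*t) < 0"
      by blast
    moreover have "gm + gp = gp + gm" "gm + gp + 4*gz = gp + gm + 4*gz" by simp_all
    ultimately have "0 \<le> t" "1 - gm * FF (gp+gm) t - exp (-(gp+gm+4*gz)*t) < 0" by (simp_all only:)
    with d3[of t] show False by (simp add: Pt_def)
  qed
  show "gp \<ge> 0 \<and> gm \<ge> 0 \<and> gp + 4 * gz \<ge> 0 \<and> gm + 4 * gz \<ge> 0" using gp0 gm0 c3 c4 by simp
qed

end
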